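(* Let $G$ be a finite undirected graph, let $\tau\ge 1$ and $k$ be integers, and let $G'$ be the $(k,\tau)$-truss of $G$. Then for every vertex $v\in V(G')$ we have $d_\tau(v,G')\ge k-1$.
   Context: Graphs are finite, simple, undirected and unweighted. A path may repeat vertices; its length is its number of edges. For vertices $v,u$ of a graph $H$, $u$ is $\tau$-hop reachable from $v$ in $H$ if $H$ contains a path between $u$ and $v$ of length at most $\tau$. $N_\tau(v,H)$ is the set of vertices $u\neq v$ that are $\tau$-hop reachable from $v$ in $H$, and $d_\tau(v,H)=|N_\tau(v,H)|$. For an edge $e=(u,v)$ of $H$, $\Delta_\tau(e,H)=N_\tau(u,H)\cap N_\tau(v,H)$ (the $\tau$-hop common neighbors of $e$) and the higher-order support is $\mathrm{sup}_\tau(e,H)=|\Delta_\tau(e,H)|$. The $(k,\tau)$-truss of $G$ is the maximal subgraph $G'$ of $G$ such that $\mathrm{sup}_\tau(e,G')\ge k-2$ for every edge $e\in E(G')$ (supports computed inside $G'$) and no more edges of $G$ can be added while keeping this property; a subgraph is determined by its edge set, its vertex set $V(G')$ being the set of endpoints of its edges. *)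

theory Defs
  imports Main
begin

definition simple_graph :: "'a set \<Rightarrow> 'a set set \<Rightarrow> bool" where
  "simple_graph V E \<longleftrightarrow> finite V \<and> (\<forall>e\<in>E. \<exists>x y. x \<noteq> y \<and> x \<in> V \<and> y \<in> V \<and> e = {x, y})"

text \<open>A subgraph is determined by its edge set; its vertex set is the set of endpoints.\<close>

definition verts :: "'a set set \<Rightarrow> 'a set" where
  "verts H = \<Union>H"

text \<open>A path (vertices may repeat) in H, given as a nonempty vertex list; its length is
the number of edges, i.e. length of the list minus one.\<close>

definition is_path :: "'a set set \<Rightarrow> 'a list \<Rightarrow> bool" where
  "is_path H xs \<longleftrightarrow> xs \<noteq> [] \<and> (\<forall>i. Suc i < length xs \<longrightarrow> {xs ! i, xs ! Suc i} \<in> H)"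

definition hop_reachable :: "'a set set \<Rightarrow> nat \<Rightarrow> 'a \<Rightarrow> 'a \<Rightarrow> bool" where
  "hop_reachable H \<tau> v u \<longleftrightarrow>
     (\<exists>xs. is_path H xs \<and> hd xs = v \<and> last xs = u \<and> length xs - 1 \<le> \<tau>)"

definition hop_nbrs :: "nat \<Rightarrow> 'a \<Rightarrow> 'a set set \<Rightarrow> 'a set" where
  "hop_nbrs \<tau> v H = {u. u \<noteq> v \<and> hop_reachable H \<tau> v u}"

definition hop_degree :: "nat \<Rightarrow> 'a \<Rightarrow> 'a set set \<Rightarrow> nat" where
  "hop_degree \<tau> v H = card (hop_nbrs \<tau> v H)"

definition hop_support :: "nat \<Rightarrow> 'a \<Rightarrow> 'a \<Rightarrow> 'a set set \<Rightarrow> nat" where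
  "hop_support \<tau> u v H = card (hop_nbrs \<tau> u H \<inter> hop_nbrs \<tau> v H)"

definition truss_property :: "int \<Rightarrow> nat \<Rightarrow> 'a set set \<Rightarrow> bool" where
  "truss_property k \<tau> H \<longleftrightarrow> (\<forall>u v. {u, v} \<in> H \<longrightarrow> int (hop_support \<tau> u v H) \<ge> k - 2)"

definition is_truss :: "'a set set \<Rightarrow> int \<Rightarrow> nat \<Rightarrow> 'a set set \<Rightarrow> bool" where
  "is_truss E k \<tau> G' \<longleftrightarrow> G' \<subseteq> E \<and> truss_property k \<tau> G' \<and>
     (\<forall>F. G' \<subset> F \<and> F \<subseteq> E \<longrightarrow> \<not> truss_property k \<tau> F)"

end

theory Submission
  imports Defs
begin

lemma nbrs_sub:
  assumes "G' \<subseteq> E" "simple_graph V E"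
  shows "hop_nbrs \<tau> v G' \<subseteq> V"
proof
  fix u assume "u \<in> hop_nbrs \<tau> v G'"
  then obtain xs where u: "u \<noteq> v" "is_path G' xs" "hd xs = v" "last xs = u"
    unfolding hop_nbrs_def hop_reachable_def by blast
  have ne: "xs \<noteq> []" using u(2) is_path_def by blast
  have "length xs \<ge> 2"
  proof (rule ccontr)
    assume "\<not> length xs \<ge> 2"
    moreover have "length xs \<noteq> 0" using ne by simp
    ultimately have "length xs = 1" by linarith
    then have "hd xs = last xs" by (cases xs) auto
    then show False using u by simp
  qed
  then have "\<exists>m. length xs = Suc (Suc m)" by (intro exI[of _ "length xs - 2"]) arith
  then obtain m where m: "length xs = Suc (Suc m)" by blast
  have "\<forall>i. Suc i < length xs \<longrightarrow> {xs ! i, xs ! Suc i} \<in> G'" using u(2) unfolding is_path_def by blast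
  then have "{xs ! m, xs ! Suc m} \<in> G'" using m by auto
  moreover have "xs ! Suc m = u" using u(4) ne m by (simp add: last_conv_nth)
  ultimately have eE: "{xs ! m, u} \<in> E" using assms(1) by auto
  have "\<forall>e\<in>E. \<exists>x y. x \<noteq> y \<and> x \<in> V \<and> y \<in> V \<and> e = {x, y}"
    using assms(2) unfolding simple_graph_def by (elim conjE)
  from bspec[OF this eE] obtain x y where xy: "x \<in> V" "y \<in> V" "{xs ! m, u} = {x, y}" by (elim exE conjE)
  have "u \<in> {xs ! m, u}" by simp
  then have "u \<in> {x, y}" by (simp only: xy(3))
  then show "u \<in> V" using xy by auto
qed

theorem mainTheorem1:
  fixes V :: "'a set" and E :: "'a set set" and G' :: "'a set set"
    and \<tau> :: nat and k :: int and v :: 'a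
  assumes "simple_graph V E"
    and "\<tau> \<ge> 1"
    and "is_truss E k \<tau> G'"
    and "v \<in> verts G'"
  shows "int (hop_degree \<tau> v G') \<ge> k - 1"
proof -
  have sub: "G' \<subseteq> E" and tp: "truss_property k \<tau> G'" using assms(3) unfolding is_truss_def by auto
  obtain e where e: "e \<in> G'" "v \<in> e" using assms(4) unfolding verts_def by auto
  then obtain x y where xy: "x \<noteq> y" "e = {x, y}" using sub assms(1) unfolding simple_graph_def by blast
  obtain u where uv: "u \<noteq> v" "{v, u} \<in> G'"
    using xy e by (metis doubleton_eq_iff insert_iff singletonD)
  have "int (hop_support \<tau> v u G') \<ge> k - 2" using tp uv(2) unfolding truss_property_def by blast
  have fin: "finite (hop_nbrs \<tau> v G')"
    using finite_subset[OF nbrs_sub[OF sub assms(1)]] assms(1) unfolding simple_graph_def by blast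
  have "is_path G' [v, u]" using uv(2) unfolding is_path_def
    by (auto simp: less_Suc_eq nth_Cons split: nat.splits)
  then have "u \<in> hop_nbrs \<tau> v G'" using uv(1) assms(2) unfolding hop_nbrs_def hop_reachable_def
    by (intro CollectI conjI exI[of _ "[v,u]"]) auto
  then have "insert u (hop_nbrs \<tau> v G' \<inter> hop_nbrs \<tau> u G') \<subseteq> hop_nbrs \<tau> v G'" by auto
  moreover have "u \<notin> hop_nbrs \<tau> u G'" unfolding hop_nbrs_def by auto
  ultimately have "card (hop_nbrs \<tau> v G' \<inter> hop_nbrs \<tau> u G') + 1 \<le> hop_degree \<tau> v G'"
    using fin unfolding hop_degree_def
    by (metis (no_types, lifting) IntE Suc_eq_plus1 card_insert_disjoint card_mono finite_Int)
  then show ?thesis using \<open>int (hop_support \<tau> v u G') \<ge> k - 2\<close> unfolding hop_support_def by linarith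
qed

end
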